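(* Let $\mathcal H=(C,f,D,g)$ be a hybrid plant and $\mathcal A\subset\mathbb R^n$ a closed set. Suppose there exist a continuous function $\sigma:(0,\infty)\to[0,\infty)$ and $\varepsilon>0$ such that $|f(x,u)|\le\sigma(|x|_{\mathcal A})$ for all $(x,u)\in C$ with $0<|x|_{\mathcal A}\le\varepsilon$. Then there exists a class-$\mathcal K$ function $\alpha$ such that every solution pair $(x,u)$ to $\mathcal H$ satisfies $|x(t,0)|_{\mathcal A}\ge\alpha(|x(0,0)|_{\mathcal A})$ for all $t\in[0,\alpha(|x(0,0)|_{\mathcal A})]$ with $(t,0)\in\operatorname{dom}(x,u)$.
   Context: Notation: $|\cdot|$ is the Euclidean norm, $|x|_{\mathcal A}=\inf_{a\in\mathcal A}|x-a|$. A class-$\mathcal K$ function is a continuous strictly increasing $\alpha:\mathbb R_{\ge0}\to\mathbb R_{\ge0}$ with $\alpha(0)=0$. A hybrid plant $\mathcal H=(C,f,D,g)$ consists of a closed flow set $C\subset\mathbb R^n\times\mathbb R^m$, a flow map $f:C\to\mathbb R^n$, a jump set $D\subset\mathbb R^n\times\mathbb R^m$ and a jump map $g:D\to\mathbb R^n$, with dynamics $\dot x=f(x,u)$ for $(x,u)\in C$ and $x^+=g(x,u)$ for $(x,u)\in D$. A set $E\subset\mathbb R_{\ge0}\times\mathbb N$ is a compact hybrid time domain if $E=\bigcup_{j=0}^{J}([t_j,t_{j+1}]\times\{j\})$ for some $J\in\mathbb N$ and $0=t_0\le t_1\le\dots\le t_{J+1}$; $E$ is a hybrid time domain if it is the union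 of a nondecreasing sequence of compact hybrid time domains. A pair $(x,u)$ with common hybrid time domain $\operatorname{dom}(x,u)$ is a solution pair to $\mathcal H$ if: (S0) $(x(0,0),u(0,0))\in C\cup D$; (S1) for each $j$ such that $I^j:=\{t:(t,j)\in\operatorname{dom}(x,u)\}$ has nonempty interior, $t\mapsto x(t,j)$ is locally absolutely continuous, $t\mapsto u(t,j)$ is Lebesgue measurable and locally essentially bounded on $\operatorname{int}I^j$, and for almost all $t\in I^j$, $(x(t,j),u(t,j))\in C$ and $\dot x(t,j)=f(x(t,j),u(t,j))$; (S2) for each $(t,j)\in\operatorname{dom}(x,u)$ with $(t,j+1)\in\operatorname{dom}(x,u)$, $(x(t,j),u(t,j))\in D$ and $x(t,j+1)=g(x(t,j),u(t,j))$. *)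

theory Defs
  imports "HOL-Analysis.Analysis"
begin

definition setdist_pt :: "'a::euclidean_space \<Rightarrow> 'a set \<Rightarrow> real" where
  "setdist_pt x A = infdist x A"

definition class_K :: "(real \<Rightarrow> real) \<Rightarrow> bool" where
  "class_K \<alpha> \<longleftrightarrow> continuous_on {0..} \<alpha> \<and> strict_mono_on {0..} \<alpha> \<and> \<alpha> 0 = 0
     \<and> (\<forall>s\<ge>0. \<alpha> s \<ge> 0)"

definition compact_htd :: "(real \<times> nat) set \<Rightarrow> bool" where
  "compact_htd E \<longleftrightarrow> (\<exists>(J::nat) (t::nat \<Rightarrow> real).
      t 0 = 0 \<and> (\<forall>j\<le>J. t j \<le> t (Suc j)) \<and>
      E = (\<Union>j\<in>{0..J}. {t j .. t (Suc j)} \<times> {j}))"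

definition htd :: "(real \<times> nat) set \<Rightarrow> bool" where
  "htd E \<longleftrightarrow> (\<exists>Es :: nat \<Rightarrow> (real \<times> nat) set.
      (\<forall>k. compact_htd (Es k)) \<and> (\<forall>k. Es k \<subseteq> Es (Suc k)) \<and> E = (\<Union>k. Es k))"

definition slice :: "(real \<times> nat) set \<Rightarrow> nat \<Rightarrow> real set" where
  "slice E j = {t. (t, j) \<in> E}"

definition abs_cont_on :: "real set \<Rightarrow> (real \<Rightarrow> 'a::real_normed_vector) \<Rightarrow> bool" where
  "abs_cont_on S h \<longleftrightarrow> (\<forall>\<epsilon>>0. \<exists>\<delta>>0. \<forall>(n::nat) (a::nat \<Rightarrow> real) (b::nat \<Rightarrow> real).
      (\<forall>k<n. a k \<le> b k \<and> {a k .. b k} \<subseteq> S) \<and>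
      (\<forall>k<n. \<forall>l<n. k \<noteq> l \<longrightarrow> b k \<le> a l \<or> b l \<le> a k) \<and>
      (\<Sum>k<n. b k - a k) < \<delta> \<longrightarrow> (\<Sum>k<n. norm (h (b k) - h (a k))) < \<epsilon>)"

definition loc_abs_cont_on :: "real set \<Rightarrow> (real \<Rightarrow> 'a::real_normed_vector) \<Rightarrow> bool" where
  "loc_abs_cont_on I h \<longleftrightarrow> (\<forall>a b. {a..b} \<subseteq> I \<longrightarrow> abs_cont_on {a..b} h)"

definition loc_ess_bounded_on :: "real set \<Rightarrow> (real \<Rightarrow> 'a::real_normed_vector) \<Rightarrow> bool" where
  "loc_ess_bounded_on U h \<longleftrightarrow> (\<forall>K. compact K \<and> K \<subseteq> U \<longrightarrow>
      (\<exists>B. AE t in lebesgue. t \<in> K \<longrightarrow> norm (h t) \<le> B))"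

text \<open>Solution pair (x,u) with common hybrid time domain E to the hybrid plant (C,f,D,g).
  Functions are total in HOL; only values on E matter.\<close>
definition solution_pair ::
  "('x::euclidean_space \<times> 'u::euclidean_space) set \<Rightarrow> ('x \<Rightarrow> 'u \<Rightarrow> 'x) \<Rightarrow> ('x \<times> 'u) set \<Rightarrow> ('x \<Rightarrow> 'u \<Rightarrow> 'x)
    \<Rightarrow> (real \<times> nat) set \<Rightarrow> (real \<Rightarrow> nat \<Rightarrow> 'x) \<Rightarrow> (real \<Rightarrow> nat \<Rightarrow> 'u) \<Rightarrow> bool" where
  "solution_pair C f D g E x u \<longleftrightarrow>
     htd E \<and>
     (x 0 0, u 0 0) \<in> C \<union> D \<and>
     (\<forall>j. interior (slice E j) \<noteq> {} \<longrightarrow>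
        loc_abs_cont_on (slice E j) (\<lambda>t. x t j) \<and>
        (\<lambda>t. u t j) \<in> borel_measurable (lebesgue_on (interior (slice E j))) \<and>
        loc_ess_bounded_on (interior (slice E j)) (\<lambda>t. u t j) \<and>
        (AE t in lebesgue. t \<in> slice E j \<longrightarrow>
            (x t j, u t j) \<in> C \<and>
            ((\<lambda>s. x s j) has_vector_derivative f (x t j) (u t j)) (at t within slice E j))) \<and>
     (\<forall>t j. (t, j) \<in> E \<and> (t, Suc j) \<in> E \<longrightarrow>
        (x t j, u t j) \<in> D \<and> x t (Suc j) = g (x t j) (u t j))"

end

theory Submission imports Defs begin

lemma real_cont_induct:
  fixes a b :: real and P :: "real \<Rightarrow> bool"
  assumes ab: "a \<le> b" and Pa: "P a"
   and step: "\<And>s. a \<le> s \<Longrightarrow> s < b \<Longrightarrow> (\<forall>y\<in>{a..s}. P y) \<Longrightarrow> \<exists>d>0. \<forall>y. s < y \<and> y < s + d \<and> y \<le> b \<longrightarrow> P y"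
   and lim: "\<And>s. a < s \<Longrightarrow> s \<le> b \<Longrightarrow> (\<forall>y\<in>{a..<s}. P y) \<Longrightarrow> P s"
  shows "\<forall>y\<in>{a..b}. P y"
proof -
  define S where "S = {s \<in> {a..b}. \<forall>y\<in>{a..s}. P y}"
  define c where "c = Sup S"
  have aS: "a \<in> S" using ab Pa by (auto simp: S_def)
  have bdd: "bdd_above S" unfolding S_def by (rule bdd_aboveI[of _ b]) auto
  have ac: "a \<le> c" unfolding c_def using aS bdd by (rule cSup_upper)
  have cb: "c \<le> b" unfolding c_def using aS by (intro cSup_least) (auto simp: S_def)
  have below: "\<forall>y\<in>{a..<c}. P y"
  proof
    fix y assume y: "y \<in> {a..<c}"
    then have "y < Sup S" by (simp add: c_def)
    then obtain s where "s \<in> S" "y < s" using aS less_cSupE by blast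
    then show "P y" using y by (auto simp: S_def)
  qed
  have Pc: "P c"
  proof (cases "c = a")
    case True then show ?thesis using Pa by simp
  next
    case False then show ?thesis using lim[of c] ac cb below by simp
  qed
  have cS: "\<forall>y\<in>{a..c}. P y" using below Pc by (auto simp: less_le)
  have "c = b"
  proof (rule ccontr)
    assume "c \<noteq> b"
    then have "c < b" using cb by simp
    from step[OF ac this cS] obtain d where d: "d > 0" "\<forall>y. c < y \<and> y < c + d \<and> y \<le> b \<longrightarrow> P y" by blast
    define e where "e = min (d/2) (b - c)"
    have e: "e > 0" "e < d" "c + e \<le> b" using d \<open>c < b\<close> by (auto simp: e_def)
    have "c + e \<in> S" unfolding S_def using cS d(2) e ac
      by (auto simp: not_le)
    then have "c + e \<le> c" unfolding c_def using bdd by (rule cSup_upper)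
    then show False using e by simp
  qed
  then show ?thesis using cS by simp
qed

lemma intervals_sum_lt:
  fixes a b :: "nat \<Rightarrow> real" and T :: "real set"
  assumes iv: "\<forall>k<n. a k \<le> b k \<and> {a k..b k} \<subseteq> T"
    and dj: "\<forall>k<n. \<forall>l<n. k \<noteq> l \<longrightarrow> b k \<le> a l \<or> b l \<le> a k"
    and T: "T \<in> sets lebesgue" and mT: "emeasure lebesgue T < ennreal \<delta>"
  shows "(\<Sum>k<n. b k - a k) < \<delta>"
proof -
  define U where "U = (\<Union>k\<in>{..<n}. {a k..b k})"
  have pw: "pairwise (\<lambda>x y. negligible ({a x..b x} \<inter> {a y..b y})) {..<n}"
  proof (rule pairwiseI)
    fix k l assume kl: "k \<in> {..<n}" "l \<in> {..<n}" "k \<noteq> l"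
    then have "b k \<le> a l \<or> b l \<le> a k" using dj by auto
    then have "{a k..b k} \<inter> {a l..b l} \<subseteq> {b k} \<or> {a k..b k} \<inter> {a l..b l} \<subseteq> {b l}"
      by auto
    then show "negligible ({a k..b k} \<inter> {a l..b l})"
      using negligible_subset negligible_sing by metis
  qed
  have "measure lebesgue U = (\<Sum>k<n. measure lebesgue {a k..b k})"
    unfolding U_def by (rule measure_negligible_finite_Union_image) (use pw in auto)
  also have "\<dots> = (\<Sum>k<n. b k - a k)"
    using iv by (intro sum.cong) auto
  finally have mU: "measure lebesgue U = (\<Sum>k<n. b k - a k)" .
  have Um: "U \<in> lmeasurable" unfolding U_def by auto
  have "U \<subseteq> T" using iv by (auto simp: U_def)
  then have "emeasure lebesgue U \<le> emeasure lebesgue T" by (rule emeasure_mono) (rule T)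
  then have "emeasure lebesgue U < ennreal \<delta>" using mT by simp
  then have "ennreal (measure lebesgue U) < ennreal \<delta>"
    using Um by (simp add: emeasure_eq_measure2)
  then have "measure lebesgue U < \<delta>"
    by (simp add: ennreal_less_iff)
  then show ?thesis using mU by simp
qed

lemma abs_cont_imp_continuous:
  fixes h :: "real \<Rightarrow> 'a::real_normed_vector"
  assumes "abs_cont_on {a..b} h"
  shows "continuous_on {a..b} h"
  unfolding continuous_on_iff
proof (intro ballI allI impI)
  fix x e assume x: "x \<in> {a..b}" and e: "(0::real) < e"
  from assms e obtain d where d: "d > 0" and H: "\<forall>(n::nat) (a'::nat \<Rightarrow> real) (b'::nat \<Rightarrow> real).
      (\<forall>k<n. a' k \<le> b' k \<and> {a' k .. b' k} \<subseteq> {a..b}) \<and>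
      (\<forall>k<n. \<forall>l<n. k \<noteq> l \<longrightarrow> b' k \<le> a' l \<or> b' l \<le> a' k) \<and>
      (\<Sum>k<n. b' k - a' k) < d \<longrightarrow> (\<Sum>k<n. norm (h (b' k) - h (a' k))) < e"
    unfolding abs_cont_on_def by blast
  show "\<exists>d>0. \<forall>x'\<in>{a..b}. dist x' x < d \<longrightarrow> dist (h x') (h x) < e"
  proof (intro exI[of _ d] conjI ballI impI)
    fix x' assume x': "x' \<in> {a..b}" "dist x' x < d"
    have "(\<Sum>k<Suc 0. norm (h ((\<lambda>_. max x x') k) - h ((\<lambda>_. min x x') k))) < e"
      using H[rule_format, of "Suc 0" "\<lambda>_. min x x'" "\<lambda>_. max x x'"] x x' d
      by (auto simp: dist_real_def) (simp_all add: max_def min_def abs_if split: if_splits)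
    then show "dist (h x') (h x) < e"
      by (cases "x \<le> x'") (auto simp: dist_norm max_def min_def norm_minus_commute)
  qed (rule d)
qed

lemma htd_slice0:
  assumes "htd E" "(t, 0) \<in> E" "0 \<le> s" "s \<le> t"
  shows "(s, 0) \<in> E"
proof -
  obtain Es :: "nat \<Rightarrow> (real \<times> nat) set" where Es: "\<forall>k. compact_htd (Es k)" "E = (\<Union>k. Es k)"
    using assms(1) unfolding htd_def by blast
  then obtain k where k: "(t, 0) \<in> Es k" using assms(2) by auto
  obtain J tt where J: "tt 0 = 0" "Es k = (\<Union>j\<in>{0..J}. {tt j .. tt (Suc j)} \<times> {j})"
    using Es(1) unfolding compact_htd_def by blast
  from k obtain j where j: "j \<in> {0..J}" "(t, 0) \<in> {tt j .. tt (Suc j)} \<times> {j}"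
    unfolding J(2) by blast
  then have "j = 0" "t \<le> tt (Suc 0)" by auto
  then have "(s, 0) \<in> {tt 0 .. tt (Suc 0)} \<times> {0::nat}" using J(1) assms(3,4) by auto
  moreover have "(0::nat) \<in> {0..J}" by simp
  ultimately have "(s, 0) \<in> Es k" unfolding J(2) by blast
  then show ?thesis using Es(2) by auto
qed

lemma alpha_exists:
  fixes \<sigma> :: "real \<Rightarrow> real" and \<epsilon> :: real
  assumes sc: "continuous_on {0<..} \<sigma>" and sp: "\<forall>s>0. \<sigma> s \<ge> 0" and ep: "\<epsilon> > 0"
  shows "\<exists>\<alpha>. class_K \<alpha> \<and> (\<forall>r>0. \<alpha> r > 0 \<and> \<alpha> r \<le> min r \<epsilon> / 8 \<and>
            (\<forall>s. min r \<epsilon> / 2 \<le> s \<and> s \<le> \<epsilon> \<longrightarrow> \<alpha> r * (\<sigma> s + 1) \<le> s / 4))"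
proof -
  define q where "q s = s / (4 * (\<sigma> s + 1))" for s
  define L where "L a = Inf (q ` {a..\<epsilon>})" for a
  have qc: "continuous_on {a..\<epsilon>} q" if "a > 0" for a
  proof -
    have "continuous_on {a..\<epsilon>} \<sigma>" by (rule continuous_on_subset[OF sc]) (use that in auto)
    note sc' = this
    have nz: "4 * (\<sigma> s + 1) \<noteq> 0" if "s \<in> {a..\<epsilon>}" for s
    proof -
      have "s > 0" using that \<open>a > 0\<close> by auto
      then have "\<sigma> s \<ge> 0" using sp by auto
      then have "\<sigma> s + 1 > 0" by linarith
      then show ?thesis by simp
    qed
    show ?thesis unfolding q_def
      by (intro continuous_on_divide continuous_on_id continuous_on_mult continuous_on_const
          continuous_on_add sc') (use nz in blast)
  qed
  have qpos: "q s > 0" if "s > 0" for s using sp that by (auto simp: q_def)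
  have qle: "q s \<le> s / 4" if "s > 0" for s
  proof -
    have "1 \<le> \<sigma> s + 1" using sp that by auto
    then show ?thesis using that unfolding q_def by (simp add: field_simps)
  qed
  have Lmin: "\<exists>x0\<in>{a..\<epsilon>}. L a = q x0 \<and> (\<forall>s\<in>{a..\<epsilon>}. q x0 \<le> q s)" if H: "0 < a" "a \<le> \<epsilon>" for a
  proof -
    obtain x0 where x0: "x0 \<in> {a..\<epsilon>}" "\<forall>y\<in>{a..\<epsilon>}. q x0 \<le> q y"
      using continuous_attains_inf[of "{a..\<epsilon>}" q] qc[OF H(1)] H by auto
    have "L a = q x0" unfolding L_def using x0 by (intro cInf_eq_minimum) auto
    then show ?thesis using x0 by blast
  qed
  have Lpos: "L a > 0" if "0 < a" "a \<le> \<epsilon>" for a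
    using Lmin[OF that] qpos that by force
  have Lle: "L a \<le> q s" if "0 < a" "a \<le> s" "s \<le> \<epsilon>" for a s
    using Lmin[of a] that by force
  have Lmono: "L a \<le> L a'" if H: "0 < a" "a \<le> a'" "a' \<le> \<epsilon>" for a a'
  proof -
    obtain x1 where "x1 \<in> {a'..\<epsilon>}" "L a' = q x1" using Lmin[of a'] H by auto
    then show ?thesis using Lle[of a x1] that by auto
  qed
  have Lcont: "continuous_on {0<..\<epsilon>} L"
    unfolding continuous_on_iff
  proof (intro ballI allI impI)
    fix a0 e assume a0: "a0 \<in> {0<..\<epsilon>}" and e: "(0::real) < e"
    have "uniformly_continuous_on {a0/2..\<epsilon>} q"
      using a0 by (intro compact_uniformly_continuous qc) auto
    then obtain d where d: "d > 0" and dq: "\<And>x x'. x \<in> {a0/2..\<epsilon>} \<Longrightarrow> x' \<in> {a0/2..\<epsilon>} \<Longrightarrow>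
          dist x' x < d \<Longrightarrow> dist (q x') (q x) < e/2"
      unfolding uniformly_continuous_on_def using e by (meson half_gt_zero)
    have key: "L a' - e/2 \<le> L a" if H: "a0/2 \<le> a" "a \<le> a'" "a' \<le> \<epsilon>" "a' - a < d" for a a'
    proof -
      have "0 < a" using that a0 by auto
      obtain x0 where x0: "x0 \<in> {a..\<epsilon>}" "L a = q x0" using Lmin[of a] H \<open>0 < a\<close> by auto
      show ?thesis
      proof (cases "a' \<le> x0")
        case True then show ?thesis using Lle[of a' x0] x0 \<open>0<a\<close> that e by auto
      next
        case False
        then have "dist (q x0) (q a') < e/2" using dq[of a' x0] x0 that by (auto simp: dist_real_def)
        moreover have "L a' \<le> q a'" using Lle[of a' a'] that \<open>0<a\<close> by auto
        ultimately show ?thesis using x0 unfolding dist_real_def by (smt (verit))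
      qed
    qed
    show "\<exists>d>0. \<forall>x'\<in>{0<..\<epsilon>}. dist x' a0 < d \<longrightarrow> dist (L x') (L a0) < e"
    proof (intro exI[of _ "min d (a0/2)"] conjI ballI impI)
      show "0 < min d (a0/2)" using d a0 by auto
      fix x' assume x': "x' \<in> {0<..\<epsilon>}" "dist x' a0 < min d (a0/2)"
      show "dist (L x') (L a0) < e"
      proof (cases "x' \<le> a0")
        case True
        then have "L a0 - e/2 \<le> L x'" "L x' \<le> L a0"
          using key[of x' a0] Lmono[of x' a0] x' a0 by (auto simp: dist_real_def)
        then show ?thesis using e by (auto simp: dist_real_def)
      next
        case False
        then have "L x' - e/2 \<le> L a0" "L a0 \<le> L x'"
          using key[of a0 x'] Lmono[of a0 x'] x' a0 by (auto simp: dist_real_def)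
        then show ?thesis using e by (auto simp: dist_real_def)
      qed
    qed
  qed
  define \<alpha> where "\<alpha> r = (if r \<le> 0 then 0 else L (min r \<epsilon> / 2) * (r / (1 + r)))" for r
  have apos: "\<alpha> r > 0" if "r > 0" for r
    using that Lpos[of "min r \<epsilon> / 2"] ep by (auto simp: \<alpha>_def)
  have ale: "\<alpha> r \<le> L (min r \<epsilon> / 2)" if "r > 0" for r
  proof -
    have "L (min r \<epsilon> / 2) > 0" using that Lpos[of "min r \<epsilon> / 2"] ep by auto
    moreover have "r / (1 + r) \<le> 1" using that by auto
    ultimately have "L (min r \<epsilon> / 2) * (r / (1 + r)) \<le> L (min r \<epsilon> / 2) * 1"
      by (intro mult_left_mono) auto
    then show ?thesis using that by (simp add: \<alpha>_def)
  qed
  have aq: "\<alpha> r \<le> q s" if "r > 0" "min r \<epsilon> / 2 \<le> s" "s \<le> \<epsilon>" for r s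
    using ale[OF that(1)] Lle[of "min r \<epsilon> / 2" s] that ep by auto
  have a8: "\<alpha> r \<le> min r \<epsilon> / 8" if "r > 0" for r
  proof -
    have "min r \<epsilon> / 2 \<le> \<epsilon>" "min r \<epsilon> / 2 > 0" using that ep by auto
    then have "\<alpha> r \<le> q (min r \<epsilon> / 2)" "q (min r \<epsilon> / 2) \<le> min r \<epsilon> / 2 / 4"
      using aq[of r "min r \<epsilon> / 2"] qle[of "min r \<epsilon> / 2"] that by auto
    then show ?thesis by simp
  qed
  have amain: "\<alpha> r * (\<sigma> s + 1) \<le> s / 4" if "r > 0" "min r \<epsilon> / 2 \<le> s" "s \<le> \<epsilon>" for r s
  proof -
    have "\<sigma> s + 1 > 0" using sp that ep
      by (metis add_nonneg_pos half_gt_zero less_le_trans min_less_iff_conj zero_less_one)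
    then show ?thesis using aq[OF that] unfolding q_def by (simp add: field_simps)
  qed
  have cK: "class_K \<alpha>"
    unfolding class_K_def
  proof (intro conjI allI impI)
    show "\<alpha> 0 = 0" by (simp add: \<alpha>_def)
    show "0 \<le> \<alpha> s" if "0 \<le> s" for s using apos[of s] that by (cases "s = 0") (auto simp: \<alpha>_def)
    show "strict_mono_on {0..} \<alpha>"
    proof (rule strict_mono_onI)
      fix r r' :: real assume rr: "r \<in> {0..}" "r' \<in> {0..}" "r < r'"
      show "\<alpha> r < \<alpha> r'"
      proof (cases "r = 0")
        case True then show ?thesis using apos[of r'] rr by (simp add: \<alpha>_def)
      next
        case False
        then have r0: "r > 0" using rr by auto
        have L1: "L (min r \<epsilon> / 2) \<le> L (min r' \<epsilon> / 2)" using Lmono[of "min r \<epsilon> / 2" "min r' \<epsilon> / 2"] r0 rr ep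
          by auto
        have L0: "L (min r \<epsilon> / 2) > 0" using Lpos[of "min r \<epsilon> / 2"] r0 ep by auto
        have f: "r / (1 + r) < r' / (1 + r')" using r0 rr by (simp add: field_simps)
        have "L (min r \<epsilon> / 2) * (r / (1 + r)) < L (min r \<epsilon> / 2) * (r' / (1 + r'))"
          using f L0 by (rule mult_strict_left_mono)
        also have "\<dots> \<le> L (min r' \<epsilon> / 2) * (r' / (1 + r'))"
          using L1 r0 rr by (intro mult_right_mono) auto
        finally show ?thesis using r0 rr by (simp add: \<alpha>_def)
      qed
    qed
    have c1: "continuous_on {0<..} \<alpha>"
    proof -
      have "continuous_on {0<..} (\<lambda>r. L (min r \<epsilon> / 2) * (r / (1 + r)))"
      proof (intro continuous_intros)
        show "continuous_on {0<..} (\<lambda>r. L (min r \<epsilon> / 2))"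
        proof (rule continuous_on_compose2[OF Lcont, of "{0<..}" "\<lambda>r. min r \<epsilon> / 2"])
          show "continuous_on {0<..} (\<lambda>r. min r \<epsilon> / 2)"
            by (intro continuous_on_divide continuous_on_min continuous_on_id continuous_on_const) auto
          show "(\<lambda>r. min r \<epsilon> / 2) ` {0<..} \<subseteq> {0<..\<epsilon>}" using ep by auto
        qed
      qed auto
      then show ?thesis by (rule continuous_on_cong[THEN iffD1, rotated 2]) (auto simp: \<alpha>_def)
    qed
    show "continuous_on {0..} \<alpha>"
      unfolding continuous_on_eq_continuous_within
    proof
      fix x :: real assume x: "x \<in> {0..}"
      show "continuous (at x within {0..}) \<alpha>"
      proof (cases "x = 0")
        case False
        have "x \<in> interior {0<..}" using x False by (simp add: interior_open)
        then have "isCont \<alpha> x" using c1 by (intro continuous_on_interior[of "{0<..}"]) auto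
        then show ?thesis by (rule continuous_at_imp_continuous_within)
      next
        case True
        show ?thesis unfolding continuous_within_eps_delta
        proof (intro allI impI)
          fix e :: real assume e: "e > 0"
          show "\<exists>d>0. \<forall>x'\<in>{0..}. dist x' x < d \<longrightarrow> dist (\<alpha> x') (\<alpha> x) < e"
          proof (intro exI[of _ e] conjI ballI impI)
            fix x' :: real assume "x' \<in> {0..}" "dist x' x < e"
            then have x': "0 \<le> x'" "x' < e" using True by (auto simp: dist_real_def)
            show "dist (\<alpha> x') (\<alpha> x) < e"
            proof (cases "x' = 0")
              case True then show ?thesis using \<open>x = 0\<close> e by (simp add: \<alpha>_def)
            next
              case False
              then have "0 < \<alpha> x'" "\<alpha> x' \<le> min x' \<epsilon> / 8" using a8[of x'] apos[of x'] x' by auto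
              moreover have "\<alpha> x = 0" using \<open>x = 0\<close> by (simp add: \<alpha>_def)
              ultimately show ?thesis using x' by (simp add: dist_real_def)
            qed
          qed (rule e)
        qed
      qed
    qed
  qed
  show ?thesis using cK apos a8 amain by blast
qed

lemma core:
  fixes x :: "real \<Rightarrow> 'a::euclidean_space" and A :: "'a set"
  assumes t: "t > 0" and ac: "abs_cont_on {0..t} x" and N: "N \<in> null_sets lebesgue"
    and rho: "\<rho> > 0" and init: "infdist (x 0) A \<ge> \<rho>"
    and good: "\<And>s. s \<in> {0..t} \<Longrightarrow> s \<notin> N \<Longrightarrow> \<rho>/2 < infdist (x s) A \<Longrightarrow> infdist (x s) A \<le> \<rho> \<Longrightarrow>
        \<exists>v. (x has_vector_derivative v) (at s within {0..t}) \<and> norm v + 1 \<le> \<rho> / (4 * t)"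
  shows "infdist (x t) A \<ge> \<rho> / 2"
proof -
  define \<eta> where "\<eta> = \<rho> / 8"
  have eta: "\<eta> > 0" using rho by (simp add: \<eta>_def)
  from ac eta obtain \<delta> where dl: "\<delta> > 0" and H: "\<forall>(n::nat) (a::nat \<Rightarrow> real) (b::nat \<Rightarrow> real).
      (\<forall>k<n. a k \<le> b k \<and> {a k .. b k} \<subseteq> {0..t}) \<and>
      (\<forall>k<n. \<forall>l<n. k \<noteq> l \<longrightarrow> b k \<le> a l \<or> b l \<le> a k) \<and>
      (\<Sum>k<n. b k - a k) < \<delta> \<longrightarrow> (\<Sum>k<n. norm (x (b k) - x (a k))) < \<eta>"
    unfolding abs_cont_on_def by blast
  have Nsets: "N \<in> sets lebesgue" using N by auto
  obtain T where T: "open T" "N \<subseteq> T" "emeasure lebesgue (T - N) < ennreal \<delta>"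
    using sets_lebesgue_outer_open[OF Nsets dl] by metis
  have Tsets: "T \<in> sets lebesgue" using T(1) by auto
  have "emeasure lebesgue T \<le> emeasure lebesgue ((T - N) \<union> N)"
    by (rule emeasure_mono) (use Nsets Tsets in auto)
  also have "\<dots> \<le> emeasure lebesgue (T - N) + emeasure lebesgue N"
    by (rule emeasure_subadditive) (use Nsets Tsets in auto)
  also have "\<dots> = emeasure lebesgue (T - N)" using N by auto
  finally have mT: "emeasure lebesgue T < ennreal \<delta>" using T(3) by simp
  define valid where "valid n a b s \<longleftrightarrow> (\<forall>k<n. a k \<le> b k \<and> {a k..b k} \<subseteq> {0..s} \<inter> T) \<and>
      (\<forall>k<n. \<forall>l<n. k \<noteq> l \<longrightarrow> b k \<le> a l \<or> b l \<le> a k)" for n :: nat and a b :: "nat \<Rightarrow> real" and s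
  define Ws where "Ws s = {(\<Sum>k<n. norm (x (b k) - x (a k))) | n a b. valid n a b s}" for s
  define W where "W s = Sup (Ws s)" for s
  have Ws0: "0 \<in> Ws s" for s
    unfolding Ws_def valid_def by (rule CollectI, rule exI[of _ 0]) auto
  have Wsbd: "w < \<eta>" if wW: "w \<in> Ws s" and st: "s \<le> t" for w s
  proof -
    obtain n a b where w: "w = (\<Sum>k<n. norm (x (b k) - x (a k)))" "valid n a b s"
      using wW unfolding Ws_def by blast
    have "(\<Sum>k<n. b k - a k) < \<delta>"
      by (rule intervals_sum_lt[OF _ _ Tsets mT]) (use w(2) in \<open>auto simp: valid_def\<close>)
    moreover have "\<forall>k<n. a k \<le> b k \<and> {a k .. b k} \<subseteq> {0..t}" using w(2) st
      unfolding valid_def by (meson atLeastatMost_subset_iff inf.boundedE order.trans)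
    ultimately show ?thesis using H w(2) unfolding w(1) valid_def by blast
  qed
  have bdd: "bdd_above (Ws s)" if "s \<le> t" for s
    using Wsbd[OF _ that] by (meson bdd_aboveI less_imp_le)
  have W0: "0 \<le> W s" if "s \<le> t" for s
    unfolding W_def using Ws0 bdd[OF that] by (rule cSup_upper)
  have Wle: "W s \<le> \<eta>" if st: "s \<le> t" for s
  proof -
    have "Ws s \<noteq> {}" using Ws0 by blast
    then show ?thesis unfolding W_def
    proof (rule cSup_least)
      fix w assume "w \<in> Ws s"
      then show "w \<le> \<eta>" using Wsbd[OF _ st] less_imp_le by blast
    qed
  qed
  have Wmono: "W s \<le> W s'" if ss: "s \<le> s'" "s' \<le> t" for s s'
  proof -
    have "Ws s \<subseteq> Ws s'"
    proof
      fix w assume "w \<in> Ws s"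
      then obtain n a b where w: "w = (\<Sum>k<n. norm (x (b k) - x (a k)))" "valid n a b s"
        unfolding Ws_def by blast
      have sub: "{0..s} \<inter> T \<subseteq> {0..s'} \<inter> T" using ss(1) by auto
      have "valid n a b s'" using w(2) sub unfolding valid_def by (meson order_trans)
      then show "w \<in> Ws s'" unfolding Ws_def using w(1) by blast
    qed
    moreover have "Ws s \<noteq> {}" using Ws0 by blast
    ultimately show ?thesis unfolding W_def using bdd[OF ss(2)] by (metis cSup_subset_mono)
  qed
  have Wext: "W s + norm (x s' - x s) \<le> W s'" if ss: "0 \<le> s" "s \<le> s'" "s' \<le> t" "{s..s'} \<subseteq> T" for s s'
  proof -
    have "w \<le> W s' - norm (x s' - x s)" if wW: "w \<in> Ws s" for w
    proof -
      obtain n a b where w: "w = (\<Sum>k<n. norm (x (b k) - x (a k)))" "valid n a b s"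
        using wW unfolding Ws_def by blast
      define a' where "a' = a(n := s)"
      define b' where "b' = b(n := s')"
      have v1: "\<forall>k<n. a k \<le> b k \<and> {a k..b k} \<subseteq> {0..s} \<inter> T" using w(2) unfolding valid_def by blast
      have v2: "\<forall>k<n. \<forall>l<n. k \<noteq> l \<longrightarrow> b k \<le> a l \<or> b l \<le> a k" using w(2) unfolding valid_def by blast
      have bs: "b k \<le> s" if "k < n" for k
      proof -
        have "b k \<in> {a k..b k}" using v1 that by auto
        then show ?thesis using v1 that by auto
      qed
      have p1: "\<forall>k<Suc n. a' k \<le> b' k \<and> {a' k..b' k} \<subseteq> {0..s'} \<inter> T"
      proof (intro allI impI)
        fix k assume k: "k < Suc n"
        show "a' k \<le> b' k \<and> {a' k..b' k} \<subseteq> {0..s'} \<inter> T"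
        proof (cases "k = n")
          case True then show ?thesis using ss by (auto simp: a'_def b'_def)
        next
          case False
          then have "k < n" using k by auto
          then have "a k \<le> b k" "{a k..b k} \<subseteq> {0..s} \<inter> T" using v1 by auto
          moreover have "{0..s} \<inter> T \<subseteq> {0..s'} \<inter> T" using ss by auto
          ultimately show ?thesis using False ss(2) by (auto simp: a'_def b'_def)
        qed
      qed
      have p2: "\<forall>k<Suc n. \<forall>l<Suc n. k \<noteq> l \<longrightarrow> b' k \<le> a' l \<or> b' l \<le> a' k"
      proof (intro allI impI)
        fix k l assume kl: "k < Suc n" "l < Suc n" "k \<noteq> l"
        show "b' k \<le> a' l \<or> b' l \<le> a' k"
        proof (cases "k = n")
          case True
          then have "l < n" using kl by auto
          then show ?thesis using True bs[of l] kl by (auto simp: a'_def b'_def)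
        next
          case False
          note kn = False
          show ?thesis
          proof (cases "l = n")
            case True
            then have "k < n" using kl kn by auto
            then show ?thesis using True bs[of k] kl by (auto simp: a'_def b'_def)
          next
            case False
            then show ?thesis using kn kl v2 by (auto simp: a'_def b'_def)
          qed
        qed
      qed
      have "valid (Suc n) a' b' s'" unfolding valid_def using p1 p2 by blast
      then have "(\<Sum>k<Suc n. norm (x (b' k) - x (a' k))) \<in> Ws s'" unfolding Ws_def by blast
      then have le: "(\<Sum>k<Suc n. norm (x (b' k) - x (a' k))) \<le> W s'"
        unfolding W_def using bdd[OF ss(3)] by (metis cSup_upper)
      have "(\<Sum>k<n. norm (x (b' k) - x (a' k))) = w"
        unfolding w(1) by (rule sum.cong) (auto simp: a'_def b'_def)
      then have "(\<Sum>k<Suc n. norm (x (b' k) - x (a' k))) = w + norm (x s' - x s)"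
        by (simp add: a'_def b'_def)
      then show ?thesis using le by simp
    qed
    moreover have "Ws s \<noteq> {}" using Ws0 by blast
    ultimately have "W s \<le> W s' - norm (x s' - x s)" unfolding W_def by (metis cSup_least)
    then show ?thesis by simp
  qed
  define c where "c = \<rho> / (4 * t)"
  have c0: "c > 0" using rho t by (simp add: c_def)
  have ct: "c * t = \<rho> / 4" using t by (simp add: c_def)
  define \<phi> where "\<phi> y = infdist (x y) A" for y
  have xc: "continuous_on {0..t} x" by (rule abs_cont_imp_continuous[OF ac])
  have \<phi>c: "continuous_on {0..t} \<phi>" unfolding \<phi>_def using xc by (rule continuous_on_infdist)
  have \<phi>tri: "\<phi> y \<ge> \<phi> s - norm (x y - x s)" for s y
    using infdist_triangle[of "x s" A "x y"] unfolding \<phi>_def by (simp add: dist_norm norm_minus_commute)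
  define P where "P y \<longleftrightarrow> \<phi> y \<ge> \<rho> - c * y - W y" for y
  have all: "\<forall>y\<in>{0..t}. P y"
  proof (rule real_cont_induct)
    show "0 \<le> t" using t by simp
    show "P 0" unfolding P_def using init W0[of 0] t by (simp add: \<phi>_def)
  next
    fix s assume s: "0 \<le> s" "s < t" and IH: "\<forall>y\<in>{0..s}. P y"
    then have Ps: "\<phi> s \<ge> \<rho> - c * s - W s" unfolding P_def by auto
    have cs: "c * s \<le> \<rho> / 4" using ct s c0 by (metis less_imp_le mult_left_mono)
    have low: "\<phi> s > \<rho> / 2" using Ps cs Wle[of s] s rho unfolding \<eta>_def by linarith
    show "\<exists>d>0. \<forall>y. s < y \<and> y < s + d \<and> y \<le> t \<longrightarrow> P y"
    proof (cases "\<phi> s > \<rho>")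
      case True
      then obtain d where d: "d > 0" "\<forall>y\<in>{0..t}. dist y s < d \<longrightarrow> dist (\<phi> y) (\<phi> s) < \<phi> s - \<rho>"
        using \<phi>c s unfolding continuous_on_iff by (metis atLeastAtMost_iff diff_gt_0_iff_gt less_imp_le)
      show ?thesis
      proof (intro exI[of _ d] conjI allI impI)
        fix y assume y: "s < y \<and> y < s + d \<and> y \<le> t"
        then have "dist (\<phi> y) (\<phi> s) < \<phi> s - \<rho>" using d s by (auto simp: dist_real_def)
        then have "\<phi> y > \<rho>" by (auto simp: dist_real_def)
        moreover have "c * y \<ge> 0" using c0 y s by auto
        moreover have "W y \<ge> 0" using W0 y by auto
        ultimately show "P y" unfolding P_def by linarith
      qed (rule d(1))
    next
      case False
      note notbig = False
      show ?thesis
      proof (cases "s \<in> N")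
        case True
        then have "s \<in> T" using T(2) by auto
        then obtain d where d: "d > 0" "ball s d \<subseteq> T" using T(1) open_contains_ball by blast
        show ?thesis
        proof (intro exI[of _ d] conjI allI impI)
          fix y assume y: "s < y \<and> y < s + d \<and> y \<le> t"
          have "{s..y} \<subseteq> ball s d" using y by (auto simp: dist_real_def)
          then have "W s + norm (x y - x s) \<le> W y" using Wext[of s y] y s d by auto
          moreover have "c * s \<le> c * y" using c0 y by auto
          ultimately show "P y" unfolding P_def using Ps \<phi>tri[of s y] by linarith
        qed (rule d(1))
      next
        case False
        then obtain v where v: "(x has_vector_derivative v) (at s within {0..t})" "norm v + 1 \<le> c"
          using good[of s] s low notbig unfolding c_def \<phi>_def by auto
        then have "(x has_derivative (\<lambda>h. h *\<^sub>R v)) (at s within {0..t})"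
          by (simp add: has_vector_derivative_def)
        then obtain d where d: "d > 0" "\<forall>y\<in>{0..t}. norm (y - s) < d \<longrightarrow>
            norm (x y - x s - (y - s) *\<^sub>R v) \<le> 1 * norm (y - s)"
          unfolding has_derivative_within_alt by (meson zero_less_one)
        show ?thesis
        proof (intro exI[of _ d] conjI allI impI)
          fix y assume y: "s < y \<and> y < s + d \<and> y \<le> t"
          then have "y \<in> {0..t}" "norm (y - s) < d" "norm (y - s) = y - s" using s by auto
          then have "norm (x y - x s - (y - s) *\<^sub>R v) \<le> (y - s)" using d(2) by fastforce
          moreover have "norm (x y - x s) \<le> norm (x y - x s - (y - s) *\<^sub>R v) + norm ((y - s) *\<^sub>R v)"
            using norm_triangle_ineq[of "x y - x s - (y - s) *\<^sub>R v" "(y - s) *\<^sub>R v"] by simp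
          moreover have "norm ((y - s) *\<^sub>R v) = (y - s) * norm v" using y by simp
          ultimately have "norm (x y - x s) \<le> (y - s) * (norm v + 1)" by (simp add: algebra_simps)
          also have "\<dots> \<le> (y - s) * c" using v(2) y by (intro mult_left_mono) auto
          finally have nx: "norm (x y - x s) \<le> c * y - c * s" by (simp add: algebra_simps)
          have "W s \<le> W y" using Wmono[of s y] y by auto
          then show "P y" unfolding P_def using Ps \<phi>tri[of s y] nx by linarith
        qed (rule d(1))
      qed
    qed
  next
    fix s assume s: "0 < s" "s \<le> t" and IH: "\<forall>y\<in>{0..<s}. P y"
    show "P s"
    proof (rule ccontr)
      assume nP: "\<not> P s"
      define g where "g y = \<phi> y + c * y" for y
      have gc: "continuous_on {0..t} g" unfolding g_def by (intro continuous_intros \<phi>c)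
      define e where "e = \<rho> - W s - g s"
      have e: "e > 0" using nP unfolding e_def g_def P_def by auto
      obtain d where d: "d > 0" "\<forall>y\<in>{0..t}. dist y s < d \<longrightarrow> dist (g y) (g s) < e"
        using gc s e unfolding continuous_on_iff by (metis atLeastAtMost_iff less_imp_le)
      define y where "y = s - min d s / 2"
      have y: "0 \<le> y" "y < s" "dist y s < d" using d s by (auto simp: y_def dist_real_def)
      then have "dist (g y) (g s) < e" using d s by auto
      then have "g y < \<rho> - W s" unfolding e_def by (auto simp: dist_real_def)
      moreover have "P y" using IH y by auto
      moreover have "W y \<le> W s" using Wmono[of y s] y s by auto
      ultimately show False unfolding P_def g_def by linarith
    qed
  qed
  then have "P t" using t by auto
  then show ?thesis unfolding P_def \<phi>_def using ct Wle[of t] rho unfolding \<eta>_def by force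
qed

theorem lemma4:
  fixes C D :: "((real^('n::finite)) \<times> (real^('m::finite))) set"
    and f g :: "(real^('n::finite)) \<Rightarrow> (real^'m) \<Rightarrow> (real^'n)"
    and A :: "((real^('n::finite))) set"
    and \<sigma> :: "real \<Rightarrow> real" and \<epsilon> :: real
  assumes "closed C" and "closed A"
    and "continuous_on {0<..} \<sigma>" and "\<forall>s>0. \<sigma> s \<ge> 0"
    and "\<epsilon> > 0"
    and "\<forall>x u. (x, u) \<in> C \<and> 0 < setdist_pt x A \<and> setdist_pt x A \<le> \<epsilon>
            \<longrightarrow> norm (f x u) \<le> \<sigma> (setdist_pt x A)"
  shows "\<exists>\<alpha>. class_K \<alpha> \<and>
    (\<forall>E (x :: real \<Rightarrow> nat \<Rightarrow> (real^('n::finite))) (u :: real \<Rightarrow> nat \<Rightarrow> (real^('m::finite))).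
       solution_pair C f D g E x u \<longrightarrow>
       (\<forall>t. t \<in> {0 .. \<alpha> (setdist_pt (x 0 0) A)} \<and> (t, 0) \<in> E \<longrightarrow>
            setdist_pt (x t 0) A \<ge> \<alpha> (setdist_pt (x 0 0) A)))"
proof -
  note fb = assms(6)
  obtain \<alpha> where cK: "class_K \<alpha>" and ap: "\<forall>r>0. \<alpha> r > 0 \<and> \<alpha> r \<le> min r \<epsilon> / 8 \<and>
            (\<forall>s. min r \<epsilon> / 2 \<le> s \<and> s \<le> \<epsilon> \<longrightarrow> \<alpha> r * (\<sigma> s + 1) \<le> s / 4)"
    using alpha_exists[OF assms(3,4,5)] by blast
  have a00: "\<alpha> 0 = 0" using cK by (simp add: class_K_def)
  show ?thesis
  proof (intro exI[of _ \<alpha>] conjI allI impI)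
    show "class_K \<alpha>" by (rule cK)
    fix E and x :: "real \<Rightarrow> nat \<Rightarrow> (real^'n)" and u :: "real \<Rightarrow> nat \<Rightarrow> (real^'m)" and t :: real
    assume sol: "solution_pair C f D g E x u"
      and tt: "t \<in> {0 .. \<alpha> (setdist_pt (x 0 0) A)} \<and> (t, 0) \<in> E"
    define r where "r = infdist (x 0 0) A"
    have r0: "r \<ge> 0" unfolding r_def by (rule infdist_nonneg)
    have tr: "0 \<le> t" "t \<le> \<alpha> r" "(t, 0) \<in> E" using tt by (auto simp: r_def setdist_pt_def)
    have "\<alpha> r \<le> infdist (x t 0) A"
    proof (cases "r = 0")
      case True then show ?thesis using a00 infdist_nonneg by simp
    next
      case False
      then have rp: "r > 0" using r0 by auto
      define \<rho> where "\<rho> = min r \<epsilon>"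
      have rhop: "\<rho> > 0" using rp assms(5) by (simp add: \<rho>_def)
      have ar: "\<alpha> r \<le> \<rho> / 8" using ap rp by (simp add: \<rho>_def)
      show ?thesis
      proof (cases "t = 0")
        case True
        then show ?thesis using ar rp by (simp add: r_def[symmetric] \<rho>_def)
      next
        case False
        then have tp: "t > 0" using tr by auto
        have hE: "htd E" using sol by (simp add: solution_pair_def)
        have sub: "{0..t} \<subseteq> slice E 0"
          using htd_slice0[OF hE tr(3)] by (auto simp: slice_def)
        have "t / 2 \<in> interior {0..t}" using tp by simp
        then have "interior (slice E 0) \<noteq> {}" using interior_mono[OF sub] by blast
        then have S: "loc_abs_cont_on (slice E 0) (\<lambda>s. x s 0)"
          "AE s in lebesgue. s \<in> slice E 0 \<longrightarrow>
            (x s 0, u s 0) \<in> C \<and>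
            ((\<lambda>s. x s 0) has_vector_derivative f (x s 0) (u s 0)) (at s within slice E 0)"
          using sol unfolding solution_pair_def by blast+
        have ac: "abs_cont_on {0..t} (\<lambda>s. x s 0)" using S(1) sub unfolding loc_abs_cont_on_def by blast
        obtain N where N: "{s \<in> space lebesgue. \<not> (s \<in> slice E 0 \<longrightarrow>
            (x s 0, u s 0) \<in> C \<and>
            ((\<lambda>s. x s 0) has_vector_derivative f (x s 0) (u s 0)) (at s within slice E 0))} \<subseteq> N"
          and N0: "emeasure lebesgue N = 0" "N \<in> sets lebesgue"
          using S(2) by (rule AE_E)
        have N2: "N \<in> null_sets lebesgue" using N0 by (rule null_setsI)
        have "infdist (x t 0) A \<ge> \<rho> / 2"
        proof (rule core[OF tp ac N2 rhop])
          show "\<rho> \<le> infdist (x 0 0) A" by (simp add: r_def[symmetric] \<rho>_def)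
        next
          fix s assume s: "s \<in> {0..t}" "s \<notin> N" "\<rho> / 2 < infdist (x s 0) A" "infdist (x s 0) A \<le> \<rho>"
          have sS: "s \<in> slice E 0" using s(1) sub by auto
          then have P: "(x s 0, u s 0) \<in> C"
              "((\<lambda>s. x s 0) has_vector_derivative f (x s 0) (u s 0)) (at s within slice E 0)"
            using N(1) s(2) by auto
          have der: "((\<lambda>s. x s 0) has_vector_derivative f (x s 0) (u s 0)) (at s within {0..t})"
            by (rule has_vector_derivative_within_subset[OF P(2) sub])
          define p where "p = infdist (x s 0) A"
          have pp: "0 < p" "p \<le> \<epsilon>" "min r \<epsilon> / 2 \<le> p" using s rhop unfolding p_def \<rho>_def by auto
          have nf: "norm (f (x s 0) (u s 0)) \<le> \<sigma> p"
            using fb P(1) pp unfolding p_def setdist_pt_def by blast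
          have am: "\<alpha> r * (\<sigma> p + 1) \<le> p / 4" using ap rp pp by blast
          have sp: "\<sigma> p + 1 > 0" using assms(4) pp by (metis add_nonneg_pos zero_less_one)
          have "t * (\<sigma> p + 1) \<le> \<alpha> r * (\<sigma> p + 1)" using tr sp by (intro mult_right_mono) auto
          also have "\<dots> \<le> \<rho> / 4" using am s(4) unfolding p_def by linarith
          finally have "\<sigma> p + 1 \<le> \<rho> / (4 * t)" using tp by (simp add: field_simps)
          then show "\<exists>v. ((\<lambda>s. x s 0) has_vector_derivative v) (at s within {0..t}) \<and> norm v + 1 \<le> \<rho> / (4 * t)"
            using der nf by force
        qed
        then show ?thesis using ar rhop by linarith
      qed
    qed
    then show "setdist_pt (x t 0) A \<ge> \<alpha> (setdist_pt (x 0 0) A)"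
      by (simp add: setdist_pt_def r_def)
  qed
qed

end
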